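(* Let $\mathbf{R}$ be a real $n\times M$ matrix and $\mathbf{F}$ a real $m\times M$ matrix with $m\ge M>n$, and suppose $\mathbf{F}$ has full column rank $M$. Then $$\|\mathbf{A}_s\|=\|(\mathbf{F}\mathbf{R}^{+})^{+}\|\le\|\mathbf{R}\mathbf{F}^{+}\|=\|\mathbf{A}_p\|,$$ where $\|\mathbf{Y}\|=\sqrt{\operatorname{Tr}(\mathbf{Y}^{*}\mathbf{Y})}$ is the Hilbert–Schmidt (Frobenius) norm. Consequently, the mean square reconstruction errors due to data noise satisfy $e_s\le e_p$.
   Context: For a matrix $\mathbf{X}$, $\mathbf{X}^{+}$ denotes its Moore–Penrose pseudoinverse. The columns of $\mathbf{R}$ are $M$ known probe parameter vectors in $\mathbb{R}^n$, and the columns of $\mathbf{F}$ are the corresponding measured patterns in $\mathbb{R}^m$. The standard-tomography reconstruction matrix is $\mathbf{A}_s=(\mathbf{F}\mathbf{R}^{+})^{+}$, and the data-pattern reconstruction matrix is $\mathbf{A}_p=\mathbf{R}\mathbf{F}^{+}$. For $\alpha\in\{s,p\}$, the mean square error is $e_\alpha^2=\overline{\|\mathbf{A}_\alpha\Delta\mathbf{p}\|^2}$, where the bar denotes the average over data-noise vectors $\Delta\mathbf{p}\in\mathbb{R}^m$ of fixed Euclidean norm $\epsilon$, uniformly distributed in direction. This average equals $\epsilon^2\|\mathbf{A}_\alpha\|^2/m$. *)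

theory Defs
  imports "HOL-Analysis.Analysis"
begin

text \<open>Moore-Penrose pseudoinverse, defined by the four Penrose conditions
  (it exists and is unique for every real matrix).\<close>
definition pinv :: "real^'c^'r \<Rightarrow> real^'r^'c" where
  "pinv A = (THE X. A ** X ** A = A \<and> X ** A ** X = X \<and>
                    transpose (A ** X) = A ** X \<and> transpose (X ** A) = X ** A)"

definition hs_norm :: "real^'c^'r \<Rightarrow> real" where
  "hs_norm Y = sqrt (trace (transpose Y ** Y))"

text \<open>Root mean square error e_alpha for noise of norm eps in R^m, using the
  stated identity  e_alpha^2 = eps^2 * norm(A_alpha)^2 / m.\<close>
definition rms_err :: "real \<Rightarrow> real^'m^'n \<Rightarrow> real" where
  "rms_err eps A = sqrt (eps\<^sup>2 * (hs_norm A)\<^sup>2 / real CARD('m))"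

end

theory Submission imports Defs begin

abbreviation penrose :: "real^'c^'r \<Rightarrow> real^'r^'c \<Rightarrow> bool" where
  "penrose A X \<equiv> A ** X ** A = A \<and> X ** A ** X = X \<and>
                    transpose (A ** X) = A ** X \<and> transpose (X ** A) = X ** A"

lemma penrose_unique:
  fixes A :: "real^'c^'r"
  assumes X: "penrose A X" and Y: "penrose A Y"
  shows "X = Y"
proof -
  have "X = X ** A ** X" using X by simp
  also have "\<dots> = X ** transpose (A ** X)" using X by (simp add: matrix_mul_assoc)
  also have "\<dots> = X ** transpose X ** transpose A" by (simp add: matrix_transpose_mul matrix_mul_assoc)
  also have "\<dots> = X ** transpose X ** transpose (A ** Y ** A)" using Y by simp
  also have "\<dots> = X ** transpose (A ** X) ** transpose (A ** Y)" by (simp add: matrix_transpose_mul matrix_mul_assoc)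
  also have "\<dots> = X ** A ** X ** A ** Y" using X Y by (simp add: matrix_mul_assoc)
  also have "\<dots> = X ** A ** Y" using X by (simp add: matrix_mul_assoc)
  finally have 1: "X = X ** A ** Y" .
  have "Y = Y ** A ** Y" using Y by simp
  also have "\<dots> = transpose (Y ** A) ** Y" using Y by (simp add: matrix_mul_assoc)
  also have "\<dots> = transpose A ** transpose Y ** Y" by (simp add: matrix_transpose_mul matrix_mul_assoc)
  also have "\<dots> = transpose (A ** X ** A) ** transpose Y ** Y" using X by simp
  also have "\<dots> = transpose (X ** A) ** transpose (Y ** A) ** Y" by (simp add: matrix_transpose_mul matrix_mul_assoc)
  also have "\<dots> = X ** A ** Y ** A ** Y" using X Y by (simp add: matrix_mul_assoc)
  also have "\<dots> = X ** A ** Y" using Y by (metis matrix_mul_assoc)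
  finally show ?thesis using 1 by simp
qed

lemma transpose_add: "transpose (A + B) = transpose A + transpose (B::real^'a^'b)"
  by (vector transpose_def)
lemma transpose_diff: "transpose (A - B) = transpose A - transpose (B::real^'a^'b)"
  by (vector transpose_def)
lemma matrix_diff_ldistrib: "(A::real^'a^'b) ** (B - C) = A ** B - A ** C"
  by (vector matrix_matrix_mult_def sum_subtractf right_diff_distrib)
lemma matrix_diff_rdistrib: "((B::real^'a^'b) - C) ** A = B ** A - C ** A"
  by (vector matrix_matrix_mult_def sum_subtractf left_diff_distrib)
lemma matrix_add_rdistrib: "((B::real^'a^'b) + C) ** A = B ** A + C ** A"
  by (vector matrix_matrix_mult_def sum.distrib distrib_right)

lemma pinv_exists:
  fixes A :: "real^'c^'r"
  shows "\<exists>X. penrose A X"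
proof -
  define S where "S = range (\<lambda>w. transpose A *v w)"
  have subS: "subspace S" unfolding S_def subspace_def
  proof (intro conjI ballI allI)
    show "0 \<in> range (\<lambda>w. transpose A *v w)" by (metis matrix_vector_mult_0_right rangeI)
  next
    fix x y assume "x \<in> range (\<lambda>w. transpose A *v w)" "y \<in> range (\<lambda>w. transpose A *v w)"
    then obtain u v where "x = transpose A *v u" "y = transpose A *v v" by blast
    then show "x + y \<in> range (\<lambda>w. transpose A *v w)"
      by (metis matrix_vector_right_distrib rangeI)
  next
    fix c :: real and x assume "x \<in> range (\<lambda>w. transpose A *v w)"
    then obtain u where "x = transpose A *v u" by blast
    then show "c *\<^sub>R x \<in> range (\<lambda>w. transpose A *v w)"
      by (metis matrix_vector_mult_scaleR rangeI)
  qed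
  obtain Bs where Bs: "Bs \<subseteq> S" "pairwise orthogonal Bs" "\<And>x. x \<in> Bs \<Longrightarrow> norm x = 1"
     "independent Bs" "span Bs = S"
    using orthonormal_basis_subspace[OF subS] by metis
  have finB: "finite Bs" using Bs(4) independent_imp_finite by blast
  define P :: "real^'c^'c" where "P = (\<chi> i j. \<Sum>b\<in>Bs. b$i * b$j)"
  have Pv: "P *v x = (\<Sum>b\<in>Bs. (b \<bullet> x) *\<^sub>R b)" for x
    unfolding P_def
    by (simp add: vec_eq_iff matrix_vector_mult_def inner_vec_def sum_distrib_left
        sum_distrib_right mult_ac sum_component) (subst sum.swap, simp)
  have PT: "transpose P = P" unfolding P_def transpose_def by (simp add: mult.commute)
  have PS: "P *v x \<in> S" for x
    unfolding Pv Bs(5)[symmetric] by (intro span_sum span_scale span_base)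
  have Pb: "P *v b = b" if "b \<in> Bs" for b
  proof -
    have "(\<Sum>c\<in>Bs. (c \<bullet> b) *\<^sub>R c) = (\<Sum>c\<in>Bs. if c = b then b else 0)"
    proof (rule sum.cong)
      fix c assume c: "c \<in> Bs"
      show "(c \<bullet> b) *\<^sub>R c = (if c = b then b else 0)"
      proof (cases "c = b")
        case True
        then show ?thesis using Bs(3)[OF that] by (simp add: power2_norm_eq_inner[symmetric])
      next
        case False
        then show ?thesis using Bs(2) c that by (auto simp: pairwise_def orthogonal_def)
      qed
    qed simp
    then show ?thesis using that finB by (simp add: Pv)
  qed
  have PSx: "P *v x = x" if "x \<in> S" for x
  proof -
    have "x \<in> span Bs" using that Bs(5) by simp
    then show ?thesis
    proof (induction rule: span_induct)
      case base show ?case unfolding subspace_def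
        by (simp add: matrix_vector_right_distrib matrix_vector_mult_scaleR)
    next
      case (step x) then show ?case using Pb by simp
    qed
  qed
  have PP: "P ** P = P"
    by (simp add: matrix_eq PS PSx flip: matrix_vector_mul_assoc)
  have PAT: "P ** transpose A = transpose A"
    by (simp add: matrix_eq PSx S_def flip: matrix_vector_mul_assoc del: transpose_matrix_vector)
  have AP: "A ** P = A"
    by (metis PAT PT matrix_transpose_mul transpose_transpose)
  define h where "h = transpose A ** A + (mat 1 - P)"
  have hT: "transpose h = h" unfolding h_def
    by (simp add: transpose_add transpose_diff PT matrix_transpose_mul)
  have Ph: "P ** h = transpose A ** A"
    unfolding h_def by (simp add: matrix_add_ldistrib matrix_diff_ldistrib PP matrix_mul_assoc PAT)
  have hP: "h ** P = transpose A ** A"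
    unfolding h_def by (simp add: matrix_add_rdistrib matrix_diff_rdistrib PP AP flip: matrix_mul_assoc)
  have inj: "inj ((*v) h)"
  proof (rule injI)
    fix x y assume "h *v x = h *v y"
    then have h0: "h *v (x - y) = 0" by (simp add: matrix_vector_mult_diff_distrib)
    define z where "z = x - y"
    have "(transpose A ** A) *v z = 0" using h0 by (simp add: z_def flip: Ph matrix_vector_mul_assoc)
    then have "z \<bullet> ((transpose A ** A) *v z) = 0" by simp
    then have "z \<bullet> ((A *v z) v* A) = 0"
      by (simp flip: matrix_vector_mul_assoc)
    then have Az: "A *v z = 0"
      by (metis inner_commute dot_lmul_matrix inner_eq_zero_iff)
    have "z - P *v z = 0" using h0 Az
      by (simp add: z_def h_def matrix_vector_mult_add_rdistrib matrix_vector_mult_diff_rdistrib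
          flip: matrix_vector_mul_assoc)
    then have "z \<in> S" using PS by (metis eq_iff_diff_eq_0)
    then obtain w where w: "z = transpose A *v w" unfolding S_def by blast
    have "z \<bullet> z = w \<bullet> (A *v z)" by (simp add: w dot_lmul_matrix del: transpose_matrix_vector)
      (metis dot_lmul_matrix inner_commute transpose_matrix_vector)
    then have "z = 0" using Az by simp
    then show "x = y" by (simp add: z_def)
  qed
  then obtain G where Gh: "G ** h = mat 1" using matrix_left_invertible_injective by blast
  then have hG: "h ** G = mat 1" using matrix_left_right_inverse by blast
  have GT: "transpose G = G"
  proof -
    have "transpose G ** h = mat 1" using hG hT by (metis matrix_transpose_mul transpose_mat)
    then have "transpose G = transpose G ** (h ** G)" using hG by simp
    also have "\<dots> = G" by (simp add: matrix_mul_assoc \<open>transpose G ** h = mat 1\<close>)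
    finally show ?thesis .
  qed
  have PhhP: "P ** h = h ** P" using Ph hP by simp
  have GP: "G ** P = P ** G"
  proof -
    have "G ** P = G ** P ** (h ** G)" using hG by simp
    also have "\<dots> = G ** (P ** h) ** G" by (simp add: matrix_mul_assoc)
    also have "\<dots> = G ** (h ** P) ** G" using PhhP by simp
    also have "\<dots> = P ** G" by (simp add: matrix_mul_assoc Gh)
    finally show ?thesis .
  qed
  define X where "X = G ** transpose A"
  have XA: "X ** A = P" unfolding X_def
    by (metis Gh hP matrix_mul_assoc matrix_mul_lid)
  have "A ** X ** A = A" by (simp add: XA AP flip: matrix_mul_assoc)
  moreover have "X ** A ** X = X" unfolding XA
    by (metis X_def matrix_mul_assoc GP PAT)
  moreover have "transpose (A ** X) = A ** X" unfolding X_def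
    by (simp add: matrix_transpose_mul GT matrix_mul_assoc)
  moreover have "transpose (X ** A) = X ** A" using XA PT by simp
  ultimately show ?thesis by blast
qed

lemma pinv_penrose: "penrose A (pinv A)"
proof -
  obtain X where "penrose A X" using pinv_exists by blast
  then show ?thesis unfolding pinv_def
  proof (rule theI[where P="\<lambda>X. penrose A X"])
    fix Y assume "penrose A Y" then show "Y = X" using \<open>penrose A X\<close> by (rule penrose_unique)
  qed
qed

lemma trace_transpose': "trace (transpose (A::real^'a^'a)) = trace A"
  by (simp add: trace_def transpose_def)

lemma trace_gram_nonneg: "trace (transpose (D::real^'a^'b) ** D) \<ge> 0"
  by (simp add: trace_def matrix_matrix_mult_def transpose_def sum_nonneg)

theorem mainTheorem2:
  fixes R :: "real^'M^'n" and F :: "real^'M^'m"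
  assumes "CARD('m) \<ge> CARD('M)" and "CARD('M) > CARD('n)"
    and "rank F = CARD('M)"
  shows "hs_norm (pinv (F ** pinv R)) \<le> hs_norm (R ** pinv F)
    \<and> (\<forall>eps::real. rms_err eps (pinv (F ** pinv R)) \<le> rms_err eps (R ** pinv F))"
proof -
  define Fp where "Fp = pinv F"
  define Rp where "Rp = pinv R"
  define B where "B = F ** Rp"
  define Bp where "Bp = pinv B"
  define X where "X = R ** Fp"
  define D where "D = X - Bp"
  have pF: "penrose F Fp" unfolding Fp_def by (rule pinv_penrose)
  have pR: "penrose R Rp" unfolding Rp_def by (rule pinv_penrose)
  have pB: "penrose B Bp" unfolding Bp_def by (rule pinv_penrose)
  have injF: "inj ((*v) F)" using assms(3) full_rank_injective by blast
  have FpF: "Fp ** F = mat 1"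
  proof (subst matrix_eq, intro allI)
    fix x
    have "F *v ((Fp ** F) *v x) = F *v x" using pF by (metis matrix_vector_mul_assoc)
    then show "(Fp ** F) *v x = mat 1 *v x" using injF by (simp add: inj_eq)
  qed
  have RRpT: "R ** Rp ** transpose Rp = transpose Rp"
  proof -
    have "transpose Rp = transpose (Rp ** (R ** Rp))" using pR by (simp add: matrix_mul_assoc)
    also have "\<dots> = transpose (R ** Rp) ** transpose Rp" by (rule matrix_transpose_mul)
    also have "\<dots> = R ** Rp ** transpose Rp" using pR by simp
    finally show ?thesis by simp
  qed
  have BpE: "Bp = transpose B ** transpose Bp ** Bp"
  proof -
    have "Bp = Bp ** B ** Bp" using pB by simp
    also have "\<dots> = transpose (Bp ** B) ** Bp" using pB by simp
    also have "\<dots> = transpose B ** transpose Bp ** Bp" by (simp add: matrix_transpose_mul)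
    finally show ?thesis .
  qed
  have RRpBp: "R ** Rp ** Bp = Bp"
  proof -
    have "R ** Rp ** Bp = R ** Rp ** transpose Rp ** transpose F ** transpose Bp ** Bp"
      by (subst BpE) (simp add: B_def matrix_transpose_mul matrix_mul_assoc)
    also have "\<dots> = transpose Rp ** transpose F ** transpose Bp ** Bp" using RRpT by simp
    also have "\<dots> = Bp" by (subst (3) BpE) (simp add: B_def matrix_transpose_mul matrix_mul_assoc)
    finally show ?thesis .
  qed
  have XC: "X ** (B ** Bp) = Bp"
  proof -
    have "X ** (B ** Bp) = R ** (Fp ** F) ** Rp ** Bp" by (simp add: X_def B_def matrix_mul_assoc)
    also have "\<dots> = Bp" using FpF RRpBp by simp
    finally show ?thesis .
  qed
  have DC: "D ** (B ** Bp) = 0"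
    using XC pB by (simp add: D_def matrix_diff_rdistrib matrix_mul_assoc)
  have cross: "trace (transpose D ** Bp) = 0"
  proof -
    have e: "Bp ** (B ** Bp) = Bp" using pB by (simp add: matrix_mul_assoc)
    have "trace (transpose D ** Bp) = trace ((transpose D ** Bp) ** (B ** Bp))"
      by (simp add: e flip: matrix_mul_assoc)
    also have "\<dots> = trace ((B ** Bp) ** (transpose D ** Bp))" by (rule trace_mul_sym)
    also have "\<dots> = trace (transpose (D ** (B ** Bp)) ** Bp)"
      using pB by (simp add: matrix_transpose_mul matrix_mul_assoc)
    also have "\<dots> = 0" using DC by (simp add: trace_def transpose_def zero_vec_def[symmetric])
    finally show ?thesis .
  qed
  have XE: "X = Bp + D" by (simp add: D_def)
  have "trace (transpose X ** X) = trace (transpose Bp ** Bp) + trace (transpose D ** D)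
        + trace (transpose Bp ** D) + trace (transpose D ** Bp)"
    unfolding XE by (simp add: transpose_add matrix_add_ldistrib matrix_add_rdistrib trace_add algebra_simps)
  moreover have "trace (transpose Bp ** D) = trace (transpose D ** Bp)"
    by (metis matrix_transpose_mul trace_transpose' transpose_transpose)
  ultimately have tr: "trace (transpose Bp ** Bp) \<le> trace (transpose X ** X)"
    using cross trace_gram_nonneg[of D] by simp
  have hs: "hs_norm Bp \<le> hs_norm X" unfolding hs_norm_def using tr by simp
  have hs0: "0 \<le> hs_norm Bp" unfolding hs_norm_def using trace_gram_nonneg[of Bp] by simp
  have sq: "(hs_norm Bp)\<^sup>2 \<le> (hs_norm X)\<^sup>2" using hs hs0 by (simp add: power_mono)
  have "rms_err eps Bp \<le> rms_err eps X" for eps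
    unfolding rms_err_def
    by (intro real_sqrt_le_mono divide_right_mono mult_left_mono sq) auto
  then show ?thesis using hs by (simp add: Bp_def B_def Rp_def X_def Fp_def)
qed

end
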